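(* \[\inf_{F\in\Delta_{L^1}(\mathbb{R}_+)}\ \sup_{p\in\mathbb{R}_+}\frac{\mathsf{W}(p,F)}{\mathsf{OPT\text{-}W}(F)}\ \ge\ \frac{2+\sqrt2}{4}.\]
   Context: Symmetric bilateral trade: $B,S$ i.i.d. with distribution $F$; posting price $p$, trade iff $B>p\ge S$. $\mathsf{W}(p,F)=\mathbb{E}[S]+\mathbb{E}[(B-S)\mathbf 1_{B>p\ge S}]$, $\mathsf{OPT\text{-}W}(F)=\mathbb{E}[\max\{B,S\}]$. $\Delta_{L^1}(\mathbb{R}_+)$ denotes probability distributions on $[0,\infty)$ with finite, nonzero mean. *)

theory Defs
  imports "HOL-Probability.Probability"
begin

definition dist_L1_pos :: "real measure \<Rightarrow> bool" where
  "dist_L1_pos F \<longleftrightarrow> prob_space F \<and> sets F = sets borel \<and>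
     (AE x in F. 0 \<le> x) \<and> integrable F (\<lambda>x. x) \<and> (\<integral>x. x \<partial>F) \<noteq> 0"

text \<open>B, S i.i.d. with distribution F: the pair (B,S) has law F x F.
  W(p,F) = E[S] + E[(B - S) 1{B > p >= S}].\<close>
definition W :: "real \<Rightarrow> real measure \<Rightarrow> real" where
  "W p F = (\<integral>s. s \<partial>F) +
     (\<integral>z. (fst z - snd z) * indicator {z. p < fst z \<and> snd z \<le> p} z \<partial>(F \<Otimes>\<^sub>M F))"

definition OPT_W :: "real measure \<Rightarrow> real" where
  "OPT_W F = (\<integral>z. max (fst z) (snd z) \<partial>(F \<Otimes>\<^sub>M F))"

end

theory Submission imports Defs begin

lemma prod_int:
  fixes f g :: "real \<Rightarrow> real"
  assumes P: "prob_space M" and f: "integrable M f" and g: "integrable M g"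
  shows "integrable (M \<Otimes>\<^sub>M M) (\<lambda>z. f (fst z) * g (snd z))"
    "integral\<^sup>L (M \<Otimes>\<^sub>M M) (\<lambda>z. f (fst z) * g (snd z)) = integral\<^sup>L M f * integral\<^sup>L M g"
proof -
  interpret PP: pair_prob_space M M
    using P by (simp add: pair_prob_space_def pair_sigma_finite_def prob_space_imp_sigma_finite)
  have fm[measurable]: "f \<in> borel_measurable M" using f by auto
  have gm[measurable]: "g \<in> borel_measurable M" using g by auto
  show I: "integrable (M \<Otimes>\<^sub>M M) (\<lambda>z. f (fst z) * g (snd z))"
  proof (rule PP.Fubini_integrable)
    show "(\<lambda>z. f (fst z) * g (snd z)) \<in> borel_measurable (M \<Otimes>\<^sub>M M)" by measurable
    have "(\<lambda>x. \<integral>y. norm (f (fst (x, y)) * g (snd (x, y))) \<partial>M) = (\<lambda>x. \<bar>f x\<bar> * (\<integral>y. \<bar>g y\<bar> \<partial>M))"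
      by (simp add: abs_mult)
    then show "integrable M (\<lambda>x. \<integral>y. norm (f (fst (x, y)) * g (snd (x, y))) \<partial>M)"
      using f by simp
    show "AE x in M. integrable M (\<lambda>y. f (fst (x, y)) * g (snd (x, y)))"
      using g by simp
  qed
  have "integral\<^sup>L (M \<Otimes>\<^sub>M M) (\<lambda>z. f (fst z) * g (snd z)) = (\<integral>x. (\<integral>y. f x * g y \<partial>M) \<partial>M)"
    using PP.integral_fst'[OF I] by simp
  also have "\<dots> = (\<integral>x. f x * integral\<^sup>L M g \<partial>M)" by simp
  also have "\<dots> = integral\<^sup>L M f * integral\<^sup>L M g" by simp
  finally show "integral\<^sup>L (M \<Otimes>\<^sub>M M) (\<lambda>z. f (fst z) * g (snd z)) = integral\<^sup>L M f * integral\<^sup>L M g" .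
qed

lemma pointwise:
  fixes b s m r :: real
  defines "c \<equiv> (2 + r) / 4" and "\<theta> \<equiv> r / 2" and "k \<equiv> r - 1"
  assumes r: "r * r = 2" "r > 0"
  shows "(b+s)/2 + \<theta>*(max 0 (b-m) + max 0 (s-m))/2 + (1-\<theta>)*(max 0 (m-b) + max 0 (m-s))/2 - c * max b s
     = c * (max 0 (min b s - m) + min (max 0 (m-b)) (max 0 (m-s)) - k * (max 0 (m-b) + max 0 (m-s)) + k*k*m)"
proof -
  have rrx: "r * (r * x) = 2 * x" for x using r by (metis mult.assoc)
  have k2: "k*k = 3 - 2*r" using r by (simp add: k_def algebra_simps)
  show ?thesis
    using r(1) unfolding c_def \<theta>_def k_def
    by (cases "b \<le> m"; cases "s \<le> m"; cases "b \<le> s") (simp_all add: max_def min_def field_simps rrx)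
qed

lemma fst_int:
  fixes f :: "real \<Rightarrow> real"
  assumes P: "prob_space M" and f: "integrable M f"
  shows "integrable (M \<Otimes>\<^sub>M M) (\<lambda>z. f (fst z))" "integral\<^sup>L (M \<Otimes>\<^sub>M M) (\<lambda>z. f (fst z)) = integral\<^sup>L M f"
    "integrable (M \<Otimes>\<^sub>M M) (\<lambda>z. f (snd z))" "integral\<^sup>L (M \<Otimes>\<^sub>M M) (\<lambda>z. f (snd z)) = integral\<^sup>L M f"
proof -
  have one: "integrable M (\<lambda>_. 1::real)"
    using P by (simp add: prob_space_def finite_measure.integrable_const)
  have i1: "integral\<^sup>L M (\<lambda>_. 1::real) = 1"
    using P by (simp add: prob_space.prob_space)
  note A = prod_int[OF P f one] and B = prod_int[OF P one f]
  show "integrable (M \<Otimes>\<^sub>M M) (\<lambda>z. f (fst z))" using A(1) by simp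
  show "integral\<^sup>L (M \<Otimes>\<^sub>M M) (\<lambda>z. f (fst z)) = integral\<^sup>L M f" using A(2) i1 by simp
  show "integrable (M \<Otimes>\<^sub>M M) (\<lambda>z. f (snd z))" using B(1) by simp
  show "integral\<^sup>L (M \<Otimes>\<^sub>M M) (\<lambda>z. f (snd z)) = integral\<^sup>L M f" using B(2) i1 by simp
qed
lemma key:
  assumes D: "dist_L1_pos F"
  defines "m \<equiv> \<integral>x. x \<partial>F"
  shows "(2 + sqrt 2)/4 * OPT_W F \<le> W m F" and "0 < m" and "m \<le> OPT_W F" and "\<And>p. W p F \<le> OPT_W F"
proof -
  have P: "prob_space F" and sF[measurable_cong]: "sets F = sets borel" and nn: "AE x in F. 0 \<le> x"
    and ix: "integrable F (\<lambda>x. x)" and m0: "m \<noteq> 0"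
    using D unfolding dist_L1_pos_def m_def by auto
  interpret P: prob_space F by fact
  interpret PP: pair_prob_space F F
    using P by (simp add: pair_prob_space_def pair_sigma_finite_def prob_space_imp_sigma_finite)
  have mpos: "0 < m"
  proof -
    have "0 \<le> m" unfolding m_def using nn by (rule integral_nonneg_AE)
    with m0 show ?thesis by simp
  qed
  show "0 < m" by fact
  have AE2: "AE z in F \<Otimes>\<^sub>M F. 0 \<le> fst z \<and> 0 \<le> snd z"
  proof (rule PP.AE_pair_measure)
    show "{x \<in> space (F \<Otimes>\<^sub>M F). 0 \<le> fst x \<and> 0 \<le> snd x} \<in> sets (F \<Otimes>\<^sub>M F)" by measurable
    show "AE x in F. AE y in F. 0 \<le> fst (x, y) \<and> 0 \<le> snd (x, y)"
      using nn proof eventually_elim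
      case (elim x)
      show ?case using nn by eventually_elim (use elim in simp)
    qed
  qed
  have iP: "integrable F (\<lambda>x. max 0 (x - q))" for q
    using ix by (intro integrable_max) auto
  have iU: "integrable F (\<lambda>x. max 0 (q - x))" for q
    using ix by (intro integrable_max) auto
  have il: "integrable F (\<lambda>x. if x \<le> q then 1 else 0::real)" for q
    by (rule P.integrable_const_bound[where B=1]) auto
  have ig: "integrable F (\<lambda>x. if q < x then 1 else 0::real)" for q
    by (rule P.integrable_const_bound[where B=1]) auto
  have ilg: "integral\<^sup>L F (\<lambda>x. if x \<le> q then 1 else 0::real) + integral\<^sup>L F (\<lambda>x. if q < x then 1 else 0::real) = 1" for q
  proof -
    have "integral\<^sup>L F (\<lambda>x. if x \<le> q then 1 else 0::real) + integral\<^sup>L F (\<lambda>x. if q < x then 1 else 0::real)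
       = integral\<^sup>L F (\<lambda>x. (if x \<le> q then 1 else 0::real) + (if q < x then 1 else 0))"
      using il ig by (simp add: integral_add)
    also have "\<dots> = integral\<^sup>L F (\<lambda>x. 1)" by (rule Bochner_Integration.integral_cong) auto
    finally show ?thesis by (simp add: P.prob_space)
  qed
  have PU: "integral\<^sup>L F (\<lambda>x. max 0 (x - m)) = integral\<^sup>L F (\<lambda>x. max 0 (m - x))"
  proof -
    have "integral\<^sup>L F (\<lambda>x. max 0 (x - m)) - integral\<^sup>L F (\<lambda>x. max 0 (m - x))
       = integral\<^sup>L F (\<lambda>x. max 0 (x - m) - max 0 (m - x))"
      using iP iU by (simp add: integral_diff)
    also have "\<dots> = integral\<^sup>L F (\<lambda>x. x - m)" by (rule Bochner_Integration.integral_cong) auto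
    also have "\<dots> = 0" using ix by (simp add: integral_diff m_def P.prob_space)
    finally show ?thesis by simp
  qed
  have dec: "(fst z - snd z) * indicator {z. q < fst z \<and> snd z \<le> q} z
      = max 0 (fst z - q) * (if snd z \<le> q then 1 else 0) + (if q < fst z then 1 else 0) * max 0 (q - snd z)" for z :: "real \<times> real" and q :: real
    by (auto simp: indicator_def max_def)
  have Wint: "integrable (F \<Otimes>\<^sub>M F) (\<lambda>z. (fst z - snd z) * indicator {z. q < fst z \<and> snd z \<le> q} z)"
   and Wval: "W q F = m + integral\<^sup>L F (\<lambda>x. max 0 (x - q)) * integral\<^sup>L F (\<lambda>x. if x \<le> q then 1 else 0::real)
        + integral\<^sup>L F (\<lambda>x. if q < x then 1 else 0::real) * integral\<^sup>L F (\<lambda>x. max 0 (q - x))" for q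
  proof -
    note A = prod_int[OF P iP il, of q q] and B = prod_int[OF P ig iU, of q q]
    show "integrable (F \<Otimes>\<^sub>M F) (\<lambda>z. (fst z - snd z) * indicator {z. q < fst z \<and> snd z \<le> q} z)"
      unfolding dec using A B by simp
    show "W q F = m + integral\<^sup>L F (\<lambda>x. max 0 (x - q)) * integral\<^sup>L F (\<lambda>x. if x \<le> q then 1 else 0::real)
        + integral\<^sup>L F (\<lambda>x. if q < x then 1 else 0::real) * integral\<^sup>L F (\<lambda>x. max 0 (q - x))"
      unfolding W_def dec m_def using A B by (simp add: integral_add)
  qed
  have imax: "integrable (F \<Otimes>\<^sub>M F) (\<lambda>z. max (fst z) (snd z))"
    using fst_int[OF P ix] by (intro integrable_max) auto
  show "\<And>p. W p F \<le> OPT_W F"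
  proof -
    fix p
    have "W p F = integral\<^sup>L (F \<Otimes>\<^sub>M F) (\<lambda>z. snd z + (fst z - snd z) * indicator {z. p < fst z \<and> snd z \<le> p} z)"
      unfolding W_def using fst_int[OF P ix] Wint[of p] by (simp add: integral_add)
    also have "\<dots> \<le> OPT_W F" unfolding OPT_W_def
      using fst_int[OF P ix] Wint[of p] imax
      by (intro integral_mono) (auto simp: indicator_def)
    finally show "W p F \<le> OPT_W F" .
  qed
  have mO: "m \<le> OPT_W F"
  proof -
    have "m = integral\<^sup>L (F \<Otimes>\<^sub>M F) (\<lambda>z. snd z)" using fst_int(4)[OF P ix] by (simp add: m_def)
    also have "\<dots> \<le> OPT_W F" unfolding OPT_W_def
      using fst_int[OF P ix] imax by (intro integral_mono) auto
    finally show ?thesis .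
  qed
  show "m \<le> OPT_W F" by fact
  define r where "r = sqrt 2"
  have rr: "r * r = 2" "r > 0" unfolding r_def by auto
  define c where "c = (2 + r) / 4"
  define \<theta> where "\<theta> = r / 2"
  define k where "k = r - 1"
  have cpos: "c > 0" unfolding c_def using rr by auto
  define e where "e = integral\<^sup>L F (\<lambda>x. max 0 (m - x))"
  have Wm: "W m F = m + e"
  proof -
    have "W m F = m + e * (integral\<^sup>L F (\<lambda>x. if x \<le> m then 1 else 0::real) + integral\<^sup>L F (\<lambda>x. if m < x then 1 else 0::real))"
      using Wval[of m] PU unfolding e_def by (simp add: algebra_simps)
    then show ?thesis using ilg[of m] by simp
  qed
  define U where "U = (\<lambda>x::real. max 0 (m - x))"
  define Pp where "Pp = (\<lambda>x::real. max 0 (x - m))"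
  define L where "L = (\<lambda>z::real\<times>real. (fst z + snd z)/2 + \<theta>*(Pp (fst z) + Pp (snd z))/2 + (1-\<theta>)*(U (fst z) + U (snd z))/2 - c * max (fst z) (snd z))"
  define R where "R = (\<lambda>z::real\<times>real. c * (U (fst z) * U (snd z) / m - k * (U (fst z) + U (snd z)) + k*k*m))"
  have iU': "integrable F U" and iP': "integrable F Pp" unfolding U_def Pp_def using iU iP by auto
  have eU: "integral\<^sup>L F U = e" and eP: "integral\<^sup>L F Pp = e" unfolding U_def Pp_def e_def using PU by auto
  note fx = fst_int[OF P ix] and fU = fst_int[OF P iU'] and fP = fst_int[OF P iP'] and UU = prod_int[OF P iU' iU']
  have intL: "integrable (F \<Otimes>\<^sub>M F) L" unfolding L_def using fx fU fP imax by auto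
  have intR: "integrable (F \<Otimes>\<^sub>M F) R" unfolding R_def using fU UU by auto
  have valL: "integral\<^sup>L (F \<Otimes>\<^sub>M F) L = m + \<theta>*e + (1-\<theta>)*e - c * OPT_W F"
    unfolding L_def OPT_W_def using fx fU fP imax eU eP
    by (simp add: integral_add integral_diff m_def)
  have valR: "integral\<^sup>L (F \<Otimes>\<^sub>M F) R = c * (e*e/m - k*(e+e) + k*k*m)"
    unfolding R_def using fU UU eU
    by (simp add: integral_add integral_diff PP.prob_space)
  have "integral\<^sup>L (F \<Otimes>\<^sub>M F) R \<le> integral\<^sup>L (F \<Otimes>\<^sub>M F) L"
  proof (rule integral_mono_AE[OF intR intL])
    show "AE z in F \<Otimes>\<^sub>M F. R z \<le> L z"
      using AE2
    proof eventually_elim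
      case (elim z)
      define b where "b = fst z"
      define s where "s = snd z"
      have b: "0 \<le> b" and s: "0 \<le> s" using elim unfolding b_def s_def by auto
      have Lz: "L z = c * (max 0 (min b s - m) + min (U b) (U s) - k * (U b + U s) + k*k*m)"
        unfolding L_def b_def[symmetric] s_def[symmetric] U_def Pp_def c_def \<theta>_def k_def
        by (rule pointwise[OF rr])
      have Ub: "0 \<le> U b" "U b \<le> m" and Us: "0 \<le> U s" "U s \<le> m" unfolding U_def using b s mpos by auto
      have "U b * U s \<le> min (U b) (U s) * m"
      proof (cases "U b \<le> U s")
        case True then show ?thesis using Ub Us by (simp add: min_def mult_left_mono)
      next
        case False then show ?thesis using Ub Us by (simp add: min_def mult_right_mono mult.commute)
      qed
      then have "U b * U s / m \<le> min (U b) (U s)" using mpos by (simp only: divide_le_eq) simp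
      then have "U b * U s / m - k * (U b + U s) + k*k*m \<le> max 0 (min b s - m) + min (U b) (U s) - k * (U b + U s) + k*k*m"
        using max.cobounded1[of 0 "min b s - m"] by linarith
      then show ?case unfolding Lz R_def b_def[symmetric] s_def[symmetric] using cpos
        by (simp add: mult_left_mono)
    qed
  qed
  then have ineq: "c * (e*e/m - k*(e+e) + k*k*m) \<le> m + \<theta>*e + (1-\<theta>)*e - c * OPT_W F"
    using valL valR by simp
  have sq: "e*e/m - k*(e+e) + k*k*m = (e - k*m)^2 / m" using mpos
    by (simp add: field_simps power2_eq_square)
  have "0 \<le> c * (e*e/m - k*(e+e) + k*k*m)" unfolding sq using cpos mpos by simp
  with ineq have "c * OPT_W F \<le> m + e" by (simp add: algebra_simps)
  then show "(2 + sqrt 2)/4 * OPT_W F \<le> W m F" using Wm unfolding c_def r_def by simp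
qed


lemma exists_dist: "dist_L1_pos (return borel (1::real))"
proof -
  have sp: "(1::real) \<in> space borel" by simp
  have ms: "(\<lambda>x::real. x) \<in> borel_measurable (return borel 1)"
    unfolding measurable_cong_sets[OF sets_return refl] by simp
  have nn: "(\<integral>\<^sup>+x. ennreal (norm x) \<partial>return borel (1::real)) = ennreal (norm (1::real))"
    by (rule nn_integral_return) auto
  have I: "integrable (return borel (1::real)) (\<lambda>x. x)"
    by (rule integrableI_bounded[OF ms]) (simp only: nn, simp)
  have AE: "AE x in return borel (1::real). 0 \<le> x"
    by (subst AE_return[OF sp]) auto
  have V: "(\<integral>x. x \<partial>return borel (1::real)) = 1"
    by (rule integral_return) auto
  show ?thesis unfolding dist_L1_pos_def using prob_space_return[OF sp] I AE V by simp
qed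


theorem lemma7:
  shows "(INF F \<in> {F. dist_L1_pos F}. SUP p \<in> {0::real..}. W p F / OPT_W F)
           \<ge> (2 + sqrt 2) / 4"
proof (rule cINF_greatest)
  show "{F. dist_L1_pos F} \<noteq> {}" using exists_dist by blast
next
  fix F assume "F \<in> {F. dist_L1_pos F}"
  then have D: "dist_L1_pos F" by simp
  define m where "m = (\<integral>x. x \<partial>F)"
  note K = key[OF D, folded m_def]
  have Opos: "0 < OPT_W F" using K(2,3) by linarith
  show "(2 + sqrt 2) / 4 \<le> (SUP p \<in> {0::real..}. W p F / OPT_W F)"
  proof (rule cSUP_upper2[where x=m])
    show "bdd_above ((\<lambda>p. W p F / OPT_W F) ` {0..})"
      by (rule bdd_aboveI2[where M=1]) (use K(4) Opos in auto)
    show "m \<in> {0..}" using K(2) by simp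
    show "(2 + sqrt 2) / 4 \<le> W m F / OPT_W F"
      using K(1) Opos by (simp add: pos_le_divide_eq)
  qed
qed

end
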